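(* The least fixed point $(T^*_\infty,P^*_\infty)$ of the modified jump $\Gamma^*_{\mathscr{TP}}$ (the stage at which the modified sequence stabilizes) is consistent, i.e. $T^{*+}_\infty\cap T^{*-}_\infty=\emptyset$ and $P^{*+}_\infty\cap P^{*-}_\infty=\emptyset$, and (hence) sound$^*$, i.e. for every $\mathcal L$-sentence $\varphi$, if either $\#\varphi\in P_0^{*-}$ or $(\mathbb N,T^*_\infty,P^*_\infty)\models_{SK}\varphi\vee\neg\varphi$, then $(\mathbb N,T^*_\infty,P^*_\infty)\not\models_{SK}\mathscr P(\varphi)$.
   Context: Language. Let $\mathcal L_{\mathbb N}$ be the language of first-order Peano arithmetic and $\mathcal L=\mathcal L_{\mathbb N}\cup\{\mathrm T,\mathrm P\}$ with unary predicates $\mathrm T,\mathrm P$. $\mathcal L$-formulas are in Tait style: literals are $s=t$, $s\neq t$, $\mathrm Tt$, $\neg\mathrm Tt$, $\mathrm Pt$, $\neg\mathrm Pt$; formulas are built from literals by $\wedge,\vee,\forall,\exists$; negation of an arbitrary formula is defined by De Morgan dualities with $\neg\neg\varphi:=\varphi$. A standard Gödel numbering is fixed; $\#e$ is the code of $e$, $\ulcorner e\urcorner$ the numeral of $\#e$, $\mathrm{val}(t)$ the value of a closed term $t$, $\dot\neg$ the primitive recursive function with $\dot\neg(\#\varphi)=\#\neg\varphi$; $\mathrm T\varphi,\mathrm P\varphi$ abbreviate $\mathrm T\ulcorner\varphi\urcorner,\mathrm P\ulcorner\varphi\urcorner$. Semantics. A partial model is $(\mathbb N,T,P)$ with $\mathbb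 N$ the standard model and $T=(T^+,T^-)$, $P=(P^+,P^-)$ pairs of subsets of $\omega$. Strong Kleene satisfaction $\models_{SK}$: arithmetic literals evaluated in $\mathbb N$; $\mathrm Tt$ satisfied iff $\mathrm{val}(t)\in T^+$, $\neg\mathrm Tt$ iff $\mathrm{val}(t)\in T^-$, likewise for $\mathrm P$ with $P^\pm$; conjunction iff both, disjunction iff at least one, $\forall x\varphi(x)$ iff all numeral instances, $\exists x\varphi(x)$ iff some numeral instance. Base paradoxicality. $\mathrm{PA}[\mathrm{SK}]$ is the two-sided sequent calculus for Strong Kleene logic with identity in $\mathcal L$ (initial sequents $\varphi\Rightarrow\varphi$, cut, weakening, the rule from $\Gamma\Rightarrow\Delta,\varphi$ infer $\neg\varphi,\Gamma\Rightarrow\Delta$, usual rules for $\wedge,\vee,\forall,\exists$, reflexivity $\Rightarrow t=t$, replacement from $\Gamma\Rightarrow\Delta,\varphi(t)$ infer $\Gamma\Rightarrow\Delta,s\neq t,\varphi(s)$) plus the initial sequents of Peano arithmetic and the induction rule for all $\mathcal L$-formulas. A sentence $\varphi$ is base paradoxical iff $\mathrm{PA}[\mathrm{SK}]$ derives $\varphi\Leftrightarrow\neg\mathrm T\varphi$ and $\neg\varphi\Leftrightarrow\mathrm T\varphi$ ($\Leftrightarrow$ meaning both sequents). $B(x)$ is an $\mathcal L_{\mathbb N}$-formula defining in $\mathbb N$ the set of codes of base paradoxical sentences, and $\Pi(x):=B(x)\vee B(\dot\neg x)$. Paradoxicality clauses. Let $\mathscr P(x)$ be the $\mathcal L$-formula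 which is the disjunction of: (1) $x$ codes a sentence and $\Pi(x)$; (2) $x$ codes a sentence $\mathrm Tt$ ($t$ a closed term) and $\mathrm P(\mathrm{val}(t))$; (3) $x$ codes a sentence $\neg\mathrm Tt$ and $\mathrm P(\mathrm{val}(t))$; (4) $x$ codes a sentence $\psi\wedge\theta$ and $(\mathrm P\psi\wedge\mathrm P\theta)\vee(\mathrm T\psi\wedge\mathrm P\theta)\vee(\mathrm T\theta\wedge\mathrm P\psi)$; (5) $x$ codes a sentence $\psi\vee\theta$ and $(\mathrm P\psi\wedge\mathrm P\theta)\vee(\neg\mathrm T\psi\wedge\mathrm P\theta)\vee(\neg\mathrm T\theta\wedge\mathrm P\psi)$; (6) $x$ codes a sentence $\forall v\psi$ and $\exists y\,\mathrm P\psi(\dot y)\wedge\forall y(\mathrm P\psi(\dot y)\vee\mathrm T\psi(\dot y))$; (7) $x$ codes a sentence $\exists v\psi$ and $\exists y\,\mathrm P\psi(\dot y)\wedge\forall y(\mathrm P\psi(\dot y)\vee\neg\mathrm T\psi(\dot y))$; here $\psi(\dot y)$ is the code of the result of substituting the numeral of $y$ for $v$. Write $\mathscr P(\varphi)$ for $\mathscr P(\ulcorner\varphi\urcorner)$. Modified sequence. Let $P_0^{*-}$ be the set of codes of the sentences $\mathrm P\ulcorner\varphi\urcorner$ for $\varphi$ an $\mathcal L$-formula. Define $\Gamma^*_{\mathscr{TP}}(T,P)=\big((\{\#\varphi:(\mathbb N,T,P)\models_{SK}\varphi\},\{\#\varphi:(\mathbb N,T,P)\models_{SK}\neg\varphi\}),(\{\#\varphi:(\mathbb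 N,T,P)\models_{SK}\mathscr P(\varphi)\},\{\#\varphi:(\mathbb N,T,P)\models_{SK}\varphi\vee\neg\varphi\}\cup P_0^{*-})\big)$, $\varphi$ ranging over $\mathcal L$-sentences. Define $(T^*_0,P^*_0)=((\emptyset,\emptyset),(\emptyset,P_0^{*-}))$, $(T^*_{\xi+1},P^*_{\xi+1})=\Gamma^*_{\mathscr{TP}}(T^*_\xi,P^*_\xi)$, and $(T^*_\lambda,P^*_\lambda)=\bigcup_{\xi<\lambda}(T^*_\xi,P^*_\xi)$ (componentwise union) for limit $\lambda$; this sequence reaches the least fixed point $(T^*_\infty,P^*_\infty)$ of $\Gamma^*_{\mathscr{TP}}$. *)

theory Defs
  imports Main "HOL-Library.Nat_Bijection" "HOL-Library.Product_Order"
begin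

section \<open>Syntax of L = L_N + {T, P} (Tait style)\<close>

datatype trm = Var nat | Zero | Sc trm | Plus trm trm | Times trm trm

datatype form =
    Eq trm trm | Neq trm trm
  | Tr trm | NTr trm
  | Pr trm | NPr trm
  | Conj form form | Disj form form
  | All nat form | Ex nat form

fun neg :: "form \<Rightarrow> form" where
  "neg (Eq s t) = Neq s t"
| "neg (Neq s t) = Eq s t"
| "neg (Tr t) = NTr t"
| "neg (NTr t) = Tr t"
| "neg (Pr t) = NPr t"
| "neg (NPr t) = Pr t"
| "neg (Conj A B) = Disj (neg A) (neg B)"
| "neg (Disj A B) = Conj (neg A) (neg B)"
| "neg (All x A) = Ex x (neg A)"
| "neg (Ex x A) = All x (neg A)"

fun tvars :: "trm \<Rightarrow> nat set" where
  "tvars (Var n) = {n}"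
| "tvars Zero = {}"
| "tvars (Sc t) = tvars t"
| "tvars (Plus s t) = tvars s \<union> tvars t"
| "tvars (Times s t) = tvars s \<union> tvars t"

fun tsubst :: "nat \<Rightarrow> trm \<Rightarrow> trm \<Rightarrow> trm" where
  "tsubst x u (Var n) = (if n = x then u else Var n)"
| "tsubst x u Zero = Zero"
| "tsubst x u (Sc t) = Sc (tsubst x u t)"
| "tsubst x u (Plus s t) = Plus (tsubst x u s) (tsubst x u t)"
| "tsubst x u (Times s t) = Times (tsubst x u s) (tsubst x u t)"

fun fv :: "form \<Rightarrow> nat set" where
  "fv (Eq s t) = tvars s \<union> tvars t"
| "fv (Neq s t) = tvars s \<union> tvars t"
| "fv (Tr t) = tvars t"
| "fv (NTr t) = tvars t"
| "fv (Pr t) = tvars t"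
| "fv (NPr t) = tvars t"
| "fv (Conj A B) = fv A \<union> fv B"
| "fv (Disj A B) = fv A \<union> fv B"
| "fv (All x A) = fv A - {x}"
| "fv (Ex x A) = fv A - {x}"

fun subst :: "nat \<Rightarrow> trm \<Rightarrow> form \<Rightarrow> form" where
  "subst x u (Eq s t) = Eq (tsubst x u s) (tsubst x u t)"
| "subst x u (Neq s t) = Neq (tsubst x u s) (tsubst x u t)"
| "subst x u (Tr t) = Tr (tsubst x u t)"
| "subst x u (NTr t) = NTr (tsubst x u t)"
| "subst x u (Pr t) = Pr (tsubst x u t)"
| "subst x u (NPr t) = NPr (tsubst x u t)"
| "subst x u (Conj A B) = Conj (subst x u A) (subst x u B)"
| "subst x u (Disj A B) = Disj (subst x u A) (subst x u B)"
| "subst x u (All y A) = (if y = x then All y A else All y (subst x u A))"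
| "subst x u (Ex y A) = (if y = x then Ex y A else Ex y (subst x u A))"

fun freefor :: "trm \<Rightarrow> nat \<Rightarrow> form \<Rightarrow> bool" where
  "freefor u x (Conj A B) = (freefor u x A \<and> freefor u x B)"
| "freefor u x (Disj A B) = (freefor u x A \<and> freefor u x B)"
| "freefor u x (All y A) = (x \<notin> fv (All y A) \<or> (y \<notin> tvars u \<and> freefor u x A))"
| "freefor u x (Ex y A) = (x \<notin> fv (Ex y A) \<or> (y \<notin> tvars u \<and> freefor u x A))"
| "freefor u x _ = True"

definition sentence :: "form \<Rightarrow> bool" where
  "sentence A \<longleftrightarrow> fv A = {}"

fun num :: "nat \<Rightarrow> trm" where
  "num 0 = Zero"
| "num (Suc n) = Sc (num n)"

fun ctrm :: "trm \<Rightarrow> nat" where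
  "ctrm (Var n) = prod_encode (0, n)"
| "ctrm Zero = prod_encode (1, 0)"
| "ctrm (Sc t) = prod_encode (2, ctrm t)"
| "ctrm (Plus s t) = prod_encode (3, prod_encode (ctrm s, ctrm t))"
| "ctrm (Times s t) = prod_encode (4, prod_encode (ctrm s, ctrm t))"

fun code :: "form \<Rightarrow> nat" where
  "code (Eq s t) = prod_encode (0, prod_encode (ctrm s, ctrm t))"
| "code (Neq s t) = prod_encode (1, prod_encode (ctrm s, ctrm t))"
| "code (Tr t) = prod_encode (2, ctrm t)"
| "code (NTr t) = prod_encode (3, ctrm t)"
| "code (Pr t) = prod_encode (4, ctrm t)"
| "code (NPr t) = prod_encode (5, ctrm t)"
| "code (Conj A B) = prod_encode (6, prod_encode (code A, code B))"
| "code (Disj A B) = prod_encode (7, prod_encode (code A, code B))"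
| "code (All x A) = prod_encode (8, prod_encode (x, code A))"
| "code (Ex x A) = prod_encode (9, prod_encode (x, code A))"

definition gq :: "form \<Rightarrow> trm" where
  "gq A = num (code A)"

section \<open>The sequent calculus PA[SK]\<close>

inductive deriv :: "form set \<Rightarrow> form set \<Rightarrow> bool" where
  ax: "deriv {A} {A}"
| cut: "deriv \<Gamma> (insert A \<Delta>) \<Longrightarrow> deriv (insert A \<Gamma>) \<Delta> \<Longrightarrow> deriv \<Gamma> \<Delta>"
| weakL: "deriv \<Gamma> \<Delta> \<Longrightarrow> deriv (insert A \<Gamma>) \<Delta>"
| weakR: "deriv \<Gamma> \<Delta> \<Longrightarrow> deriv \<Gamma> (insert A \<Delta>)"
| negL: "deriv \<Gamma> (insert A \<Delta>) \<Longrightarrow> deriv (insert (neg A) \<Gamma>) \<Delta>"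
| conjL1: "deriv (insert A \<Gamma>) \<Delta> \<Longrightarrow> deriv (insert (Conj A B) \<Gamma>) \<Delta>"
| conjL2: "deriv (insert B \<Gamma>) \<Delta> \<Longrightarrow> deriv (insert (Conj A B) \<Gamma>) \<Delta>"
| conjR: "deriv \<Gamma> (insert A \<Delta>) \<Longrightarrow> deriv \<Gamma> (insert B \<Delta>) \<Longrightarrow> deriv \<Gamma> (insert (Conj A B) \<Delta>)"
| disjL: "deriv (insert A \<Gamma>) \<Delta> \<Longrightarrow> deriv (insert B \<Gamma>) \<Delta> \<Longrightarrow> deriv (insert (Disj A B) \<Gamma>) \<Delta>"
| disjR1: "deriv \<Gamma> (insert A \<Delta>) \<Longrightarrow> deriv \<Gamma> (insert (Disj A B) \<Delta>)"
| disjR2: "deriv \<Gamma> (insert B \<Delta>) \<Longrightarrow> deriv \<Gamma> (insert (Disj A B) \<Delta>)"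
| allL: "freefor t x A \<Longrightarrow> deriv (insert (subst x t A) \<Gamma>) \<Delta> \<Longrightarrow> deriv (insert (All x A) \<Gamma>) \<Delta>"
| allR: "freefor (Var y) x A \<Longrightarrow> y \<notin> \<Union>(fv ` (\<Gamma> \<union> \<Delta>)) \<Longrightarrow> y \<notin> fv (All x A) \<Longrightarrow>
         deriv \<Gamma> (insert (subst x (Var y) A) \<Delta>) \<Longrightarrow> deriv \<Gamma> (insert (All x A) \<Delta>)"
| exL: "freefor (Var y) x A \<Longrightarrow> y \<notin> \<Union>(fv ` (\<Gamma> \<union> \<Delta>)) \<Longrightarrow> y \<notin> fv (Ex x A) \<Longrightarrow>
         deriv (insert (subst x (Var y) A) \<Gamma>) \<Delta> \<Longrightarrow> deriv (insert (Ex x A) \<Gamma>) \<Delta>"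
| exR: "freefor t x A \<Longrightarrow> deriv \<Gamma> (insert (subst x t A) \<Delta>) \<Longrightarrow> deriv \<Gamma> (insert (Ex x A) \<Delta>)"
| refl: "deriv {} {Eq t t}"
| repl: "freefor t x A \<Longrightarrow> freefor s x A \<Longrightarrow> deriv \<Gamma> (insert (subst x t A) \<Delta>) \<Longrightarrow>
         deriv \<Gamma> (insert (Neq s t) (insert (subst x s A) \<Delta>))"
| pa1: "deriv {} {Neq (Sc s) Zero}"
| pa2: "deriv {Eq (Sc s) (Sc t)} {Eq s t}"
| pa3: "deriv {} {Eq (Plus s Zero) s}"
| pa4: "deriv {} {Eq (Plus s (Sc t)) (Sc (Plus s t))}"
| pa5: "deriv {} {Eq (Times s Zero) Zero}"
| pa6: "deriv {} {Eq (Times s (Sc t)) (Plus (Times s t) s)}"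
| ind: "x \<notin> \<Union>(fv ` (\<Gamma> \<union> \<Delta>)) \<Longrightarrow> freefor (Sc (Var x)) x A \<Longrightarrow> freefor Zero x A \<Longrightarrow> freefor t x A \<Longrightarrow>
        deriv (insert A \<Gamma>) (insert (subst x (Sc (Var x)) A) \<Delta>) \<Longrightarrow>
        deriv (insert (subst x Zero A) \<Gamma>) (insert (subst x t A) \<Delta>)"

definition base_par :: "form \<Rightarrow> bool" where
  "base_par A \<longleftrightarrow> sentence A \<and>
     deriv {A} {NTr (gq A)} \<and> deriv {NTr (gq A)} {A} \<and>
     deriv {neg A} {Tr (gq A)} \<and> deriv {Tr (gq A)} {neg A}"

text \<open>Truth in N of Pi(#A) = B(#A) \<or> B(neg-dot #A), B defining base paradoxicality.\<close>
definition Pi :: "form \<Rightarrow> bool" where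
  "Pi A \<longleftrightarrow> base_par A \<or> base_par (neg A)"

section \<open>Strong Kleene semantics over partial models (N, T, P)\<close>

type_synonym pext = "nat set \<times> nat set"  (* (positive, negative) extension *)

fun evalt :: "(nat \<Rightarrow> nat) \<Rightarrow> trm \<Rightarrow> nat" where
  "evalt e (Var n) = e n"
| "evalt e Zero = 0"
| "evalt e (Sc t) = Suc (evalt e t)"
| "evalt e (Plus s t) = evalt e s + evalt e t"
| "evalt e (Times s t) = evalt e s * evalt e t"

fun sat :: "pext \<Rightarrow> pext \<Rightarrow> (nat \<Rightarrow> nat) \<Rightarrow> form \<Rightarrow> bool" where
  "sat T P e (Eq s t) = (evalt e s = evalt e t)"
| "sat T P e (Neq s t) = (evalt e s \<noteq> evalt e t)"
| "sat T P e (Tr t) = (evalt e t \<in> fst T)"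
| "sat T P e (NTr t) = (evalt e t \<in> snd T)"
| "sat T P e (Pr t) = (evalt e t \<in> fst P)"
| "sat T P e (NPr t) = (evalt e t \<in> snd P)"
| "sat T P e (Conj A B) = (sat T P e A \<and> sat T P e B)"
| "sat T P e (Disj A B) = (sat T P e A \<or> sat T P e B)"
| "sat T P e (All x A) = (\<forall>n. sat T P (e(x := n)) A)"
| "sat T P e (Ex x A) = (\<exists>n. sat T P (e(x := n)) A)"

text \<open>(N,T,P) |=_SK A for sentences A (the assignment is irrelevant).\<close>
definition ssat :: "pext \<Rightarrow> pext \<Rightarrow> form \<Rightarrow> bool" where
  "ssat T P A = sat T P (\<lambda>_. 0) A"

section \<open>SK-satisfaction of the paradoxicality formula at the code of a sentence\<close>

definition scrP :: "pext \<Rightarrow> pext \<Rightarrow> form \<Rightarrow> bool" where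
  "scrP T P A \<longleftrightarrow> sentence A \<and> (
     Pi A
   \<or> (\<exists>t. A = Tr t \<and> tvars t = {} \<and> evalt (\<lambda>_. 0) t \<in> fst P)
   \<or> (\<exists>t. A = NTr t \<and> tvars t = {} \<and> evalt (\<lambda>_. 0) t \<in> fst P)
   \<or> (\<exists>B C. A = Conj B C \<and>
        ((code B \<in> fst P \<and> code C \<in> fst P) \<or> (code B \<in> fst T \<and> code C \<in> fst P)
         \<or> (code C \<in> fst T \<and> code B \<in> fst P)))
   \<or> (\<exists>B C. A = Disj B C \<and>
        ((code B \<in> fst P \<and> code C \<in> fst P) \<or> (code B \<in> snd T \<and> code C \<in> fst P)
         \<or> (code C \<in> snd T \<and> code B \<in> fst P)))
   \<or> (\<exists>v B. A = All v B \<and> (\<exists>y. code (subst v (num y) B) \<in> fst P)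
        \<and> (\<forall>y. code (subst v (num y) B) \<in> fst P \<or> code (subst v (num y) B) \<in> fst T))
   \<or> (\<exists>v B. A = Ex v B \<and> (\<exists>y. code (subst v (num y) B) \<in> fst P)
        \<and> (\<forall>y. code (subst v (num y) B) \<in> fst P \<or> code (subst v (num y) B) \<in> snd T)))"

section \<open>The modified jump and its least fixed point\<close>

definition P0star :: "nat set" where
  "P0star = {code (Pr (gq A)) | A. True}"

definition GammaStar :: "pext \<times> pext \<Rightarrow> pext \<times> pext" where
  "GammaStar X = (case X of (T, P) \<Rightarrow>
     (({code A | A. sentence A \<and> ssat T P A}, {code A | A. sentence A \<and> ssat T P (neg A)}),
      ({code A | A. sentence A \<and> scrP T P A},
       {code A | A. sentence A \<and> ssat T P (Disj A (neg A))} \<union> P0star)))"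

text \<open>Least fixed point w.r.t. componentwise inclusion (product order).\<close>
definition lfpStar :: "pext \<times> pext" where
  "lfpStar = lfp GammaStar"

end

theory Submission
  imports Defs
begin

lemma ctrm_inj: "ctrm s = ctrm t \<Longrightarrow> s = t"
  by (induct s arbitrary: t; case_tac t; simp add: prod_encode_eq)

lemma code_inj: "code A = code B \<Longrightarrow> A = B"
  by (induct A arbitrary: B; case_tac B; auto simp: prod_encode_eq dest: ctrm_inj)

lemma neg_neg[simp]: "neg (neg A) = A"
  by (induct A) auto

lemma fv_neg[simp]: "fv (neg A) = fv A"
  by (induct A) auto

lemma subst_neg: "subst x t (neg A) = neg (subst x t A)"
  by (induct A) auto

lemma evalt_num[simp]: "evalt e (num n) = n"
  by (induct n) auto

lemma tvars_num[simp]: "tvars (num n) = {}"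
  by (induct n) auto

lemma evalt_cong: "(\<forall>z\<in>tvars t. e z = e' z) \<Longrightarrow> evalt e t = evalt e' t"
  by (induct t) auto

lemma sat_cong: "(\<forall>z\<in>fv A. e z = e' z) \<Longrightarrow> sat T P e A = sat T P e' A"
proof (induct A arbitrary: e e')
  case (All x A)
  have "\<And>n. sat T P (e(x:=n)) A = sat T P (e'(x:=n)) A"
    by (rule All.hyps) (use All.prems in auto)
  then show ?case by simp
next
  case (Ex x A)
  have "\<And>n. sat T P (e(x:=n)) A = sat T P (e'(x:=n)) A"
    by (rule Ex.hyps) (use Ex.prems in auto)
  then show ?case by simp
qed (simp; metis evalt_cong Un_iff)+

lemma evalt_tsubst: "evalt e (tsubst x u t) = evalt (e(x := evalt e u)) t"
  by (induct t) auto

lemma tsubst_nofv: "x \<notin> tvars t \<Longrightarrow> tsubst x u t = t"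
  by (induct t) auto

lemma subst_nofv: "x \<notin> fv A \<Longrightarrow> subst x t A = A"
  by (induct A) (auto simp: tsubst_nofv)


lemma sat_subst: "freefor t x A \<Longrightarrow> sat T P e (subst x t A) = sat T P (e(x := evalt e t)) A"
proof (induct A arbitrary: e)
  case (All y B)
  show ?case
  proof (cases "y = x")
    case True
    then show ?thesis by (simp del: fun_upd_apply)
  next
    case False
    show ?thesis
    proof (cases "x \<in> fv (All y B)")
      case False
      then have "subst x t (All y B) = All y B" by (rule subst_nofv)
      moreover have "sat T P e (All y B) = sat T P (e(x := evalt e t)) (All y B)"
        by (rule sat_cong) (use False in auto)
      ultimately show ?thesis by (simp del: fun_upd_apply)
    next
      case True
      with All.prems \<open>y \<noteq> x\<close> have yt: "y \<notin> tvars t" and ff: "freefor t x B" by auto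
      have "\<And>n. sat T P (e(y:=n)) (subst x t B) = sat T P (e(x := evalt e t, y := n)) B"
      proof -
        fix n
        have "sat T P (e(y:=n)) (subst x t B) = sat T P (e(y:=n, x := evalt (e(y:=n)) t)) B"
          using All.hyps[OF ff] by (simp add: fun_upd_def)
        also have "evalt (e(y:=n)) t = evalt e t" by (rule evalt_cong) (use yt in auto)
        also have "e(y:=n, x := evalt e t) = e(x := evalt e t, y := n)" using \<open>y \<noteq> x\<close> by (rule fun_upd_twist)
        finally show "sat T P (e(y:=n)) (subst x t B) = sat T P (e(x := evalt e t, y := n)) B" .
      qed
      then show ?thesis using \<open>y \<noteq> x\<close> by (simp add: fun_upd_def)
    qed
  qed
next
  case (Ex y B)
  show ?case
  proof (cases "y = x")
    case True
    then show ?thesis by (simp del: fun_upd_apply)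
  next
    case False
    show ?thesis
    proof (cases "x \<in> fv (Ex y B)")
      case False
      then have "subst x t (Ex y B) = Ex y B" by (rule subst_nofv)
      moreover have "sat T P e (Ex y B) = sat T P (e(x := evalt e t)) (Ex y B)"
        by (rule sat_cong) (use False in auto)
      ultimately show ?thesis by (simp del: fun_upd_apply)
    next
      case True
      with Ex.prems \<open>y \<noteq> x\<close> have yt: "y \<notin> tvars t" and ff: "freefor t x B" by auto
      have "\<And>n. sat T P (e(y:=n)) (subst x t B) = sat T P (e(x := evalt e t, y := n)) B"
      proof -
        fix n
        have "sat T P (e(y:=n)) (subst x t B) = sat T P (e(y:=n, x := evalt (e(y:=n)) t)) B"
          using Ex.hyps[OF ff] by (simp add: fun_upd_def)
        also have "evalt (e(y:=n)) t = evalt e t" by (rule evalt_cong) (use yt in auto)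
        also have "e(y:=n, x := evalt e t) = e(x := evalt e t, y := n)" using \<open>y \<noteq> x\<close> by (rule fun_upd_twist)
        finally show "sat T P (e(y:=n)) (subst x t B) = sat T P (e(x := evalt e t, y := n)) B" .
      qed
      then show ?thesis using \<open>y \<noteq> x\<close> by (simp add: fun_upd_def)
    qed
  qed
qed (auto simp: evalt_tsubst)

definition cons :: "pext \<Rightarrow> pext \<Rightarrow> bool" where
  "cons T P \<longleftrightarrow> fst T \<inter> snd T = {} \<and> fst P \<inter> snd P = {}"

lemma sat_cons: "cons T P \<Longrightarrow> sat T P e A \<Longrightarrow> sat T P e (neg A) \<Longrightarrow> False"
  by (induct A arbitrary: e) (auto simp: cons_def)

lemma freefor_closed: "tvars t = {} \<Longrightarrow> freefor t x A"
  by (induct A) auto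

lemma sat_upd_nofv: "y \<notin> fv A \<Longrightarrow> sat T P (e(y:=n)) A = sat T P e A"
  by (rule sat_cong) auto

lemma sat_upd2: "y \<notin> fv A - {x} \<Longrightarrow> sat T P (e(y:=n, x:=m)) A = sat T P (e(x:=m)) A"
  by (rule sat_cong) auto

lemma sound: "deriv G D \<Longrightarrow> cons T P \<Longrightarrow> (\<forall>A\<in>G. sat T P e A) \<Longrightarrow> (\<exists>B\<in>D. sat T P e B)"
proof (induct G D arbitrary: e rule: deriv.induct)
  case (negL \<Gamma> A \<Delta>)
  then show ?case using sat_cons by blast
next
  case (allL t x A \<Gamma> \<Delta>)
  then show ?case by (auto simp: sat_subst)
next
  case (exR t x A \<Gamma> \<Delta>)
  then show ?case by (auto simp: sat_subst)
next
  case (allR y x A \<Gamma> \<Delta>)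
  show ?case
  proof (cases "\<exists>B\<in>\<Delta>. sat T P e B")
    case True then show ?thesis by auto
  next
    case False
    have "sat T P (e(x := n)) A" for n
    proof -
      have G: "\<forall>A\<in>\<Gamma>. sat T P (e(y:=n)) A"
        using allR.prems(2) allR.hyps(2) by (auto simp: sat_upd_nofv)
      have D: "\<not> (\<exists>B\<in>\<Delta>. sat T P (e(y:=n)) B)"
        using False allR.hyps(2) by (auto simp: sat_upd_nofv)
      from allR.hyps(5)[OF allR.prems(1) G] D
      have "sat T P (e(y:=n)) (subst x (Var y) A)" by blast
      then have "sat T P (e(y:=n, x:=n)) A" using allR.hyps(1) by (simp add: sat_subst)
      then show ?thesis using allR.hyps(3) by (auto simp: sat_upd2)
    qed
    then show ?thesis by auto
  qed
next
  case (exL y x A \<Gamma> \<Delta>)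
  then obtain n where n: "sat T P (e(x:=n)) A" by auto
  have G: "\<forall>A\<in>insert (subst x (Var y) A) \<Gamma>. sat T P (e(y:=n)) A"
  proof -
    have "sat T P (e(y:=n, x:=n)) A"
      using n exL.hyps(3) by (auto simp: sat_upd2)
    then have "sat T P (e(y:=n)) (subst x (Var y) A)" using exL.hyps(1) by (simp add: sat_subst)
    moreover have "\<forall>A\<in>\<Gamma>. sat T P (e(y:=n)) A"
      using exL.prems(2) exL.hyps(2) by (auto simp: sat_upd_nofv)
    ultimately show ?thesis by auto
  qed
  from exL.hyps(5)[OF exL.prems(1) G] obtain B where "B \<in> \<Delta>" "sat T P (e(y:=n)) B" by blast
  then show ?case using exL.hyps(2) by (auto simp: sat_upd_nofv)
next
  case (repl t x A s \<Gamma> \<Delta>)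
  then show ?case by (auto simp: sat_subst)
next
  case (ind x \<Gamma> \<Delta> A t)
  show ?case
  proof (cases "\<exists>B\<in>\<Delta>. sat T P e B")
    case True then show ?thesis by auto
  next
    case False
    have A0: "sat T P (e(x:=0)) A" using ind.prems(2) ind.hyps(3) by (simp add: sat_subst)
    have "sat T P (e(x:=n)) A" for n
    proof (induct n)
      case 0 then show ?case using A0 .
    next
      case (Suc n)
      have IH: "sat T P (e(x:=n)) A" using Suc by (simp add: fun_upd_def)
      have G: "\<forall>B\<in>insert A \<Gamma>. sat T P (e(x:=n)) B"
        using IH ind.prems(2) ind.hyps(1) by (auto simp: sat_upd_nofv)
      have D: "\<not> (\<exists>B\<in>\<Delta>. sat T P (e(x:=n)) B)"
        using False ind.hyps(1) by (auto simp: sat_upd_nofv)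
      from ind.hyps(6)[OF ind.prems(1) G] D
      have "sat T P (e(x:=n)) (subst x (Sc (Var x)) A)" by blast
      then have "sat T P ((e(x:=n))(x := Suc n)) A"
        using sat_subst[OF ind.hyps(2), of T P "e(x:=n)"] by simp
      then have "sat T P (e(x := Suc n)) A" by simp
      then show ?case by (simp add: fun_upd_def)
    qed
    then show ?thesis using ind.hyps(4) by (simp add: sat_subst)
  qed
qed auto


fun fsz :: "form \<Rightarrow> nat" where
  "fsz (Conj A B) = Suc (fsz A + fsz B)"
| "fsz (Disj A B) = Suc (fsz A + fsz B)"
| "fsz (All x A) = Suc (fsz A)"
| "fsz (Ex x A) = Suc (fsz A)"
| "fsz _ = 1"

lemma fsz_subst[simp]: "fsz (subst x t A) = fsz A"
  by (induct A) auto

lemma tvars_tsubst_closed: "tvars t = {} \<Longrightarrow> tvars (tsubst x t u) = tvars u - {x}"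
  by (induct u) auto

lemma fv_subst_closed: "tvars t = {} \<Longrightarrow> fv (subst x t A) = fv A - {x}"
  by (induct A) (auto simp: tvars_tsubst_closed)

lemma ssat_inst: "ssat T P (subst v (num n) B) = sat T P ((\<lambda>_. 0)(v := n)) B"
  unfolding ssat_def by (simp add: sat_subst freefor_closed)

lemma not_bp_Pr: "\<not> base_par (Pr t)"
proof
  assume b: "base_par (Pr t)"
  let ?T = "({}, {}) :: pext" and ?P = "({evalt (\<lambda>_. 0) t}, {}) :: pext"
  have "cons ?T ?P" by (simp add: cons_def)
  from sound[OF _ this, of "{Pr t}" "{NTr (gq (Pr t))}" "\<lambda>_. 0"] b
  show False unfolding base_par_def by simp
qed

lemma not_bp_NPr: "\<not> base_par (NPr t)"
proof
  assume b: "base_par (NPr t)"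
  let ?T = "({}, {}) :: pext" and ?P = "({}, {evalt (\<lambda>_. 0) t}) :: pext"
  have "cons ?T ?P" by (simp add: cons_def)
  from sound[OF _ this, of "{NPr t}" "{NTr (gq (NPr t))}" "\<lambda>_. 0"] b
  show False unfolding base_par_def by simp
qed

lemma bp_sat1: "cons T P \<Longrightarrow> base_par A \<Longrightarrow> ssat T P A \<Longrightarrow> code A \<in> snd T"
  using sound[of "{A}" "{NTr (gq A)}" T P "\<lambda>_. 0"]
  unfolding base_par_def ssat_def gq_def by simp

lemma bp_sat2: "cons T P \<Longrightarrow> base_par A \<Longrightarrow> ssat T P (neg A) \<Longrightarrow> code A \<in> fst T"
  using sound[of "{neg A}" "{Tr (gq A)}" T P "\<lambda>_. 0"]
  unfolding base_par_def ssat_def gq_def by simp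

lemma ncons: "cons T P \<Longrightarrow> ssat T P B \<Longrightarrow> ssat T P (neg B) \<Longrightarrow> False"
  unfolding ssat_def using sat_cons by blast


lemma claim:
  assumes cs: "cons T P" and ov: "fst P \<inter> (fst T \<union> snd T) = {}"
    and bp: "\<forall>A. base_par A \<longrightarrow> code A \<notin> fst T \<and> code A \<notin> snd T"
    and F1: "\<And>B. code B \<in> fst T \<Longrightarrow> ssat T P B"
    and F2: "\<And>B. code B \<in> snd T \<Longrightarrow> ssat T P (neg B)"
    and F3: "\<And>B. code B \<in> fst P \<Longrightarrow> scrP T P B"
  shows "scrP T P A \<Longrightarrow> \<not> ssat T P A \<and> \<not> ssat T P (neg A)"
proof (induct "fsz A" arbitrary: A rule: less_induct)
  case less
  have IH: "\<And>B. fsz B < fsz A \<Longrightarrow> code B \<in> fst P \<Longrightarrow> \<not> ssat T P B \<and> \<not> ssat T P (neg B)"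
    using less.hyps F3 by blast
  from less.prems have sA: "sentence A" unfolding scrP_def by blast
  from less.prems have
   "Pi A
   \<or> (\<exists>t. A = Tr t \<and> tvars t = {} \<and> evalt (\<lambda>_. 0) t \<in> fst P)
   \<or> (\<exists>t. A = NTr t \<and> tvars t = {} \<and> evalt (\<lambda>_. 0) t \<in> fst P)
   \<or> (\<exists>B C. A = Conj B C \<and>
        ((code B \<in> fst P \<and> code C \<in> fst P) \<or> (code B \<in> fst T \<and> code C \<in> fst P)
         \<or> (code C \<in> fst T \<and> code B \<in> fst P)))
   \<or> (\<exists>B C. A = Disj B C \<and>
        ((code B \<in> fst P \<and> code C \<in> fst P) \<or> (code B \<in> snd T \<and> code C \<in> fst P)
         \<or> (code C \<in> snd T \<and> code B \<in> fst P)))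
   \<or> (\<exists>v B. A = All v B \<and> (\<exists>y. code (subst v (num y) B) \<in> fst P)
        \<and> (\<forall>y. code (subst v (num y) B) \<in> fst P \<or> code (subst v (num y) B) \<in> fst T))
   \<or> (\<exists>v B. A = Ex v B \<and> (\<exists>y. code (subst v (num y) B) \<in> fst P)
        \<and> (\<forall>y. code (subst v (num y) B) \<in> fst P \<or> code (subst v (num y) B) \<in> snd T))"
    unfolding scrP_def by blast
  then show ?case
  proof (elim disjE)
    assume "Pi A"
    then show ?thesis unfolding Pi_def
    proof
      assume "base_par A"
      then show ?thesis using bp bp_sat1[OF cs] bp_sat2[OF cs] by blast
    next
      assume b: "base_par (neg A)"
      show ?thesis
      proof
        show "\<not> ssat T P A"
          using bp b bp_sat2[OF cs b] by auto
        show "\<not> ssat T P (neg A)"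
          using bp b bp_sat1[OF cs b] by auto
      qed
    qed
  next
    assume "\<exists>t. A = Tr t \<and> tvars t = {} \<and> evalt (\<lambda>_. 0) t \<in> fst P"
    then show ?thesis using ov unfolding ssat_def by auto
  next
    assume "\<exists>t. A = NTr t \<and> tvars t = {} \<and> evalt (\<lambda>_. 0) t \<in> fst P"
    then show ?thesis using ov unfolding ssat_def by auto
  next
    assume "\<exists>B C. A = Conj B C \<and>
        ((code B \<in> fst P \<and> code C \<in> fst P) \<or> (code B \<in> fst T \<and> code C \<in> fst P)
         \<or> (code C \<in> fst T \<and> code B \<in> fst P))"
    then obtain B C where A: "A = Conj B C"
      and h: "code B \<in> fst P \<and> code C \<in> fst P \<or> code B \<in> fst T \<and> code C \<in> fst P \<or> code C \<in> fst T \<and> code B \<in> fst P" by blast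
    have sB: "fsz B < fsz A" "fsz C < fsz A" using A by auto
    have e1: "ssat T P A = (ssat T P B \<and> ssat T P C)" "ssat T P (neg A) = (ssat T P (neg B) \<or> ssat T P (neg C))"
      using A unfolding ssat_def by auto
    show ?thesis using h IH[OF sB(1)] IH[OF sB(2)] F1[of B] F1[of C] ncons[OF cs, of B] ncons[OF cs, of C]
      unfolding e1 by blast
  next
    assume "\<exists>B C. A = Disj B C \<and>
        ((code B \<in> fst P \<and> code C \<in> fst P) \<or> (code B \<in> snd T \<and> code C \<in> fst P)
         \<or> (code C \<in> snd T \<and> code B \<in> fst P))"
    then obtain B C where A: "A = Disj B C"
      and h: "code B \<in> fst P \<and> code C \<in> fst P \<or> code B \<in> snd T \<and> code C \<in> fst P \<or> code C \<in> snd T \<and> code B \<in> fst P" by blast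
    have sB: "fsz B < fsz A" "fsz C < fsz A" using A by auto
    have e1: "ssat T P A = (ssat T P B \<or> ssat T P C)" "ssat T P (neg A) = (ssat T P (neg B) \<and> ssat T P (neg C))"
      using A unfolding ssat_def by auto
    show ?thesis using h IH[OF sB(1)] IH[OF sB(2)] F2[of B] F2[of C] ncons[OF cs, of B] ncons[OF cs, of C]
      unfolding e1 by blast
  next
    assume "\<exists>v B. A = All v B \<and> (\<exists>y. code (subst v (num y) B) \<in> fst P)
        \<and> (\<forall>y. code (subst v (num y) B) \<in> fst P \<or> code (subst v (num y) B) \<in> fst T)"
    then obtain v B y where A: "A = All v B" and y: "code (subst v (num y) B) \<in> fst P"
      and h: "\<forall>y. code (subst v (num y) B) \<in> fst P \<or> code (subst v (num y) B) \<in> fst T" by blast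
    have sB: "\<And>y. fsz (subst v (num y) B) < fsz A" using A by auto
    have e1: "ssat T P A = (\<forall>n. ssat T P (subst v (num n) B))"
      "ssat T P (neg A) = (\<exists>n. ssat T P (neg (subst v (num n) B)))"
      using A unfolding ssat_inst subst_neg[symmetric] by (auto simp: ssat_def)
    show ?thesis unfolding e1
      using IH[OF sB] y h F1 ncons[OF cs] by blast
  next
    assume "\<exists>v B. A = Ex v B \<and> (\<exists>y. code (subst v (num y) B) \<in> fst P)
        \<and> (\<forall>y. code (subst v (num y) B) \<in> fst P \<or> code (subst v (num y) B) \<in> snd T)"
    then obtain v B y where A: "A = Ex v B" and y: "code (subst v (num y) B) \<in> fst P"
      and h: "\<forall>y. code (subst v (num y) B) \<in> fst P \<or> code (subst v (num y) B) \<in> snd T" by blast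
    have sB: "\<And>y. fsz (subst v (num y) B) < fsz A" using A by auto
    have e1: "ssat T P A = (\<exists>n. ssat T P (subst v (num n) B))"
      "ssat T P (neg A) = (\<forall>n. ssat T P (neg (subst v (num n) B)))"
      using A unfolding ssat_inst subst_neg[symmetric] by (auto simp: ssat_def)
    show ?thesis unfolding e1
      using IH[OF sB] y h F2 ncons[OF cs] by blast
  qed
qed


lemma sat_mono: "fst T \<subseteq> fst T' \<Longrightarrow> snd T \<subseteq> snd T' \<Longrightarrow> fst P \<subseteq> fst P' \<Longrightarrow> snd P \<subseteq> snd P'
  \<Longrightarrow> sat T P e A \<Longrightarrow> sat T' P' e A"
  by (induct A arbitrary: e) auto

lemma scrP_cases:
  assumes "scrP T P A"
  obtains "sentence A" "Pi A"
  | t where "sentence A" "A = Tr t" "tvars t = {}" "evalt (\<lambda>_. 0) t \<in> fst P"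
  | t where "sentence A" "A = NTr t" "tvars t = {}" "evalt (\<lambda>_. 0) t \<in> fst P"
  | B C where "sentence A" "A = Conj B C" "(code B \<in> fst P \<and> code C \<in> fst P) \<or> (code B \<in> fst T \<and> code C \<in> fst P)
         \<or> (code C \<in> fst T \<and> code B \<in> fst P)"
  | B C where "sentence A" "A = Disj B C" "(code B \<in> fst P \<and> code C \<in> fst P) \<or> (code B \<in> snd T \<and> code C \<in> fst P)
         \<or> (code C \<in> snd T \<and> code B \<in> fst P)"
  | v B where "sentence A" "A = All v B" "\<exists>y. code (subst v (num y) B) \<in> fst P"
        "\<forall>y. code (subst v (num y) B) \<in> fst P \<or> code (subst v (num y) B) \<in> fst T"
  | v B where "sentence A" "A = Ex v B" "\<exists>y. code (subst v (num y) B) \<in> fst P"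
        "\<forall>y. code (subst v (num y) B) \<in> fst P \<or> code (subst v (num y) B) \<in> snd T"
  using assms unfolding scrP_def by blast

lemma scrP_mono: "fst T \<subseteq> fst T' \<Longrightarrow> snd T \<subseteq> snd T' \<Longrightarrow> fst P \<subseteq> fst P' \<Longrightarrow> snd P \<subseteq> snd P'
  \<Longrightarrow> scrP T P A \<Longrightarrow> scrP T' P' A"
proof -
  assume h: "fst T \<subseteq> fst T'" "snd T \<subseteq> snd T'" "fst P \<subseteq> fst P'" "snd P \<subseteq> snd P'" and S: "scrP T P A"
  from S show ?thesis
  proof (cases rule: scrP_cases)
    case 1 then show ?thesis by (simp add: scrP_def)
  next
    case (2 t) then show ?thesis using h by (auto simp: scrP_def)
  next
    case (3 t) then show ?thesis using h by (auto simp: scrP_def)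
  next
    case (4 B C)
    then have "(code B \<in> fst P' \<and> code C \<in> fst P') \<or> (code B \<in> fst T' \<and> code C \<in> fst P')
         \<or> (code C \<in> fst T' \<and> code B \<in> fst P')" using h by blast
    then show ?thesis using 4 by (simp add: scrP_def)
  next
    case (5 B C)
    then have "(code B \<in> fst P' \<and> code C \<in> fst P') \<or> (code B \<in> snd T' \<and> code C \<in> fst P')
         \<or> (code C \<in> snd T' \<and> code B \<in> fst P')" using h by blast
    then show ?thesis using 5 by (simp add: scrP_def)
  next
    case (6 v B)
    then have "\<exists>y. code (subst v (num y) B) \<in> fst P'"
        "\<forall>y. code (subst v (num y) B) \<in> fst P' \<or> code (subst v (num y) B) \<in> fst T'" using h by blast+
    then show ?thesis using 6 by (simp add: scrP_def)
  next
    case (7 v B)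
    then have "\<exists>y. code (subst v (num y) B) \<in> fst P'"
        "\<forall>y. code (subst v (num y) B) \<in> fst P' \<or> code (subst v (num y) B) \<in> snd T'" using h by blast+
    then show ?thesis using 7 by (simp add: scrP_def)
  qed
qed

lemma le4: "(((a,b),(c,d)) :: pext \<times> pext) \<le> ((a',b'),(c',d')) \<longleftrightarrow> a \<subseteq> a' \<and> b \<subseteq> b' \<and> c \<subseteq> c' \<and> d \<subseteq> d'"
  by (simp add: less_eq_prod_def)

lemma le4': "(X :: pext \<times> pext) \<le> Y \<longleftrightarrow> fst (fst X) \<subseteq> fst (fst Y) \<and> snd (fst X) \<subseteq> snd (fst Y)
   \<and> fst (snd X) \<subseteq> fst (snd Y) \<and> snd (snd X) \<subseteq> snd (snd Y)"
  by (simp add: less_eq_prod_def)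

lemma Gamma_mono: "mono GammaStar"
proof (rule monoI)
  fix X Y :: "pext \<times> pext"
  assume "X \<le> Y"
  then have h: "fst (fst X) \<subseteq> fst (fst Y)" "snd (fst X) \<subseteq> snd (fst Y)"
   "fst (snd X) \<subseteq> fst (snd Y)" "snd (snd X) \<subseteq> snd (snd Y)" by (auto simp: le4')
  note m = sat_mono[OF h] scrP_mono[OF h]
  obtain T P T' P' where X: "X = (T, P)" and Y: "Y = (T', P')" by (metis prod.exhaust)
  have s1: "{code A | A. sentence A \<and> ssat T P A} \<subseteq> {code A | A. sentence A \<and> ssat T' P' A}"
    using m X Y unfolding ssat_def by auto
  have s2: "{code A | A. sentence A \<and> ssat T P (neg A)} \<subseteq> {code A | A. sentence A \<and> ssat T' P' (neg A)}"
    using m X Y unfolding ssat_def by auto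
  have s3: "{code A | A. sentence A \<and> scrP T P A} \<subseteq> {code A | A. sentence A \<and> scrP T' P' A}"
    using m X Y by auto
  have s4: "{code A | A. sentence A \<and> ssat T P (Disj A (neg A))} \<subseteq> {code A | A. sentence A \<and> ssat T' P' (Disj A (neg A))}"
    using m X Y unfolding ssat_def by auto
  show "GammaStar X \<le> GammaStar Y"
    unfolding GammaStar_def le4' X Y using s1 s2 s3 s4 by auto
qed

definition Good :: "pext \<times> pext \<Rightarrow> bool" where
  "Good X \<longleftrightarrow> cons (fst X) (snd X) \<and> fst (snd X) \<inter> (fst (fst X) \<union> snd (fst X)) = {}
     \<and> (\<forall>A. base_par A \<longrightarrow> code A \<notin> fst (fst X) \<and> code A \<notin> snd (fst X))"

lemma step:
  assumes G: "Good (T, P)" and le: "(T, P) \<le> GammaStar (T, P)"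
  shows "Good (GammaStar (T, P))"
proof -
  have cs: "cons T P" and ov: "fst P \<inter> (fst T \<union> snd T) = {}"
    and bp: "\<forall>A. base_par A \<longrightarrow> code A \<notin> fst T \<and> code A \<notin> snd T"
    using G unfolding Good_def by auto
  have le': "fst T \<subseteq> {code A | A. sentence A \<and> ssat T P A}"
     "snd T \<subseteq> {code A | A. sentence A \<and> ssat T P (neg A)}"
     "fst P \<subseteq> {code A | A. sentence A \<and> scrP T P A}"
    using le unfolding GammaStar_def le4' by auto
  have F1: "\<And>B. code B \<in> fst T \<Longrightarrow> ssat T P B" using le'(1) code_inj by blast
  have F2: "\<And>B. code B \<in> snd T \<Longrightarrow> ssat T P (neg B)" using le'(2) code_inj by blast
  have F3: "\<And>B. code B \<in> fst P \<Longrightarrow> scrP T P B" using le'(3) code_inj by blast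
  note C = claim[OF cs ov bp F1 F2 F3]
  have nP: "\<And>A. code A \<in> P0star \<Longrightarrow> \<not> scrP T P A"
  proof
    fix A assume "code A \<in> P0star" "scrP T P A"
    then obtain B where "A = Pr (gq B)" unfolding P0star_def using code_inj by blast
    with \<open>scrP T P A\<close> have "Pi (Pr (gq B))" unfolding scrP_def by auto
    then show False unfolding Pi_def using not_bp_Pr not_bp_NPr by auto
  qed
  show ?thesis
    unfolding Good_def GammaStar_def cons_def
    apply (simp only: prod.case fst_conv snd_conv)
    apply (intro conjI)
    subgoal using ncons[OF cs] code_inj by blast
    subgoal using C nP code_inj unfolding ssat_def by auto
    subgoal using C code_inj by blast
    subgoal using bp_sat1[OF cs] bp_sat2[OF cs] bp code_inj by blast
    done
qed


lemma chain_two: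
  assumes "Complete_Partial_Order.chain (\<le>) M" "x \<in> M" "y \<in> M" "mono f" "mono g"
    "c \<in> f x" "c \<in> g y"
  shows "\<exists>z\<in>M. c \<in> f z \<and> c \<in> g z"
  using assms unfolding chain_def mono_def by blast

lemma memSup:
  "c \<in> fst (fst (Sup M)) \<longleftrightarrow> (\<exists>x\<in>M. c \<in> fst (fst (x :: pext \<times> pext)))"
  "c \<in> snd (fst (Sup M)) \<longleftrightarrow> (\<exists>x\<in>M. c \<in> snd (fst (x :: pext \<times> pext)))"
  "c \<in> fst (snd (Sup M)) \<longleftrightarrow> (\<exists>x\<in>M. c \<in> fst (snd (x :: pext \<times> pext)))"
  "c \<in> snd (snd (Sup M)) \<longleftrightarrow> (\<exists>x\<in>M. c \<in> snd (snd (x :: pext \<times> pext)))"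
  by (simp_all add: fst_Sup snd_Sup image_image)

lemma monosel: "mono (\<lambda>x::pext \<times> pext. fst (fst x))" "mono (\<lambda>x::pext \<times> pext. snd (fst x))"
  "mono (\<lambda>x::pext \<times> pext. fst (snd x))" "mono (\<lambda>x::pext \<times> pext. snd (snd x))"
  by (auto simp: mono_def le4')

lemma adm: "ccpo.admissible Sup (\<le>) (\<lambda>X. Good X \<and> X \<le> GammaStar X)"
proof (rule ccpo.admissibleI)
  fix M :: "(pext \<times> pext) set"
  assume ch: "Complete_Partial_Order.chain (\<le>) M" and ne: "M \<noteq> {}"
    and all: "\<forall>x\<in>M. Good x \<and> x \<le> GammaStar x"
  have c2: "\<exists>z\<in>M. c \<in> f z \<and> c \<in> g z" if "mono f" "mono g" "c \<in> f x" "c \<in> g y" "x \<in> M" "y \<in> M" for f g c x y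
    using chain_two[OF ch that(5,6,1,2,3,4)] .
  have g1: "fst (fst (Sup M)) \<inter> snd (fst (Sup M)) = {}"
  proof -
    { fix c assume "c \<in> fst (fst (Sup M))" "c \<in> snd (fst (Sup M))"
      then obtain x y where "x \<in> M" "y \<in> M" "c \<in> fst (fst x)" "c \<in> snd (fst y)" by (auto simp: memSup)
      from c2[OF monosel(1,2) this(3,4,1,2)] all have False by (auto simp: Good_def cons_def) }
    then show ?thesis by blast
  qed
  have g2: "fst (snd (Sup M)) \<inter> snd (snd (Sup M)) = {}"
  proof -
    { fix c assume "c \<in> fst (snd (Sup M))" "c \<in> snd (snd (Sup M))"
      then obtain x y where "x \<in> M" "y \<in> M" "c \<in> fst (snd x)" "c \<in> snd (snd y)" by (auto simp: memSup)
      from c2[OF monosel(3,4) this(3,4,1,2)] all have False by (auto simp: Good_def cons_def) }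
    then show ?thesis by blast
  qed
  have g3: "fst (snd (Sup M)) \<inter> (fst (fst (Sup M)) \<union> snd (fst (Sup M))) = {}"
  proof -
    { fix c assume "c \<in> fst (snd (Sup M))" "c \<in> fst (fst (Sup M))"
      then obtain x y where "x \<in> M" "y \<in> M" "c \<in> fst (snd x)" "c \<in> fst (fst y)" by (auto simp: memSup)
      from c2[OF monosel(3,1) this(3,4,1,2)] all have False by (auto simp: Good_def) }
    moreover
    { fix c assume "c \<in> fst (snd (Sup M))" "c \<in> snd (fst (Sup M))"
      then obtain x y where "x \<in> M" "y \<in> M" "c \<in> fst (snd x)" "c \<in> snd (fst y)" by (auto simp: memSup)
      from c2[OF monosel(3,2) this(3,4,1,2)] all have False by (auto simp: Good_def) }
    ultimately show ?thesis by blast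
  qed
  have g4: "\<forall>A. base_par A \<longrightarrow> code A \<notin> fst (fst (Sup M)) \<and> code A \<notin> snd (fst (Sup M))"
    using all by (auto simp: memSup Good_def)
  have "Good (Sup M)" using g1 g2 g3 g4 unfolding Good_def cons_def by blast
  moreover have "Sup M \<le> GammaStar (Sup M)"
  proof (rule Sup_least)
    fix x assume "x \<in> M"
    then have "x \<le> GammaStar x" using all by blast
    also have "GammaStar x \<le> GammaStar (Sup M)"
      using Gamma_mono \<open>x \<in> M\<close> by (simp add: Sup_upper monoD)
    finally show "x \<le> GammaStar (Sup M)" .
  qed
  ultimately show "Good (Sup M) \<and> Sup M \<le> GammaStar (Sup M)" by blast
qed

lemma lfp_good: "Good lfpStar"
proof -
  have mt: "monotone (\<le>) (\<le>) GammaStar" using Gamma_mono unfolding mono_def monotone_def .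
  have "Good (ccpo_class.fixp GammaStar) \<and> ccpo_class.fixp GammaStar \<le> GammaStar (ccpo_class.fixp GammaStar)"
  proof (rule fixp_induct[OF adm Gamma_mono])
    show "Good (Sup {}) \<and> Sup {} \<le> GammaStar (Sup {})"
      by (simp add: Good_def cons_def fst_Sup snd_Sup)
  next
    fix X assume "Good X \<and> X \<le> GammaStar X"
    then show "Good (GammaStar X) \<and> GammaStar X \<le> GammaStar (GammaStar X)"
      using step[of "fst X" "snd X"] Gamma_mono by (simp add: monoD)
  qed
  then show ?thesis unfolding lfpStar_def lfp_eq_fixp[OF Gamma_mono] by blast
qed

theorem mainTheorem15:
  fixes T P :: "nat set \<times> nat set"
  assumes "lfpStar = (T, P)"
  shows "fst T \<inter> snd T = {} \<and> fst P \<inter> snd P = {} \<and>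
    (\<forall>A. sentence A \<and> (code A \<in> P0star \<or> ssat T P (Disj A (neg A))) \<longrightarrow> \<not> scrP T P A)"
proof -
  have G: "Good (T, P)" using lfp_good assms by simp
  have fxp: "GammaStar (T, P) = (T, P)"
    using lfp_unfold[OF Gamma_mono] assms unfolding lfpStar_def by simp
  have cT: "fst T \<inter> snd T = {}" and cP: "fst P \<inter> snd P = {}" using G by (auto simp: Good_def cons_def)
  have fP: "fst P = {code A | A. sentence A \<and> scrP T P A}"
    and sP: "snd P = {code A | A. sentence A \<and> ssat T P (Disj A (neg A))} \<union> P0star"
    using fxp unfolding GammaStar_def by (auto simp: prod_eq_iff)
  show ?thesis
  proof (intro conjI cT cP allI impI)
    fix A assume h: "sentence A \<and> (code A \<in> P0star \<or> ssat T P (Disj A (neg A)))"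
    show "\<not> scrP T P A"
    proof
      assume "scrP T P A"
      then have "code A \<in> fst P" using h fP by blast
      moreover have "code A \<in> snd P" using h sP by blast
      ultimately show False using cP by blast
    qed
  qed
qed

end
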